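(* Let $\mathcal{H}$ be a finite-dimensional Hilbert space, $\mathcal{O}\in\mathcal{L}(\mathcal{H})$ Hermitian, $\rho$ a quantum state on $\mathcal{H}$, $n\geq1$ and $1\leq k\leq n$. Let \[T_k=\frac{1}{2\lfloor n/k\rfloor}\sum_{i=0}^{\lfloor n/k\rfloor-1}\left(A_i+A_i^\dagger\right),\] where $A_i=U_{s_{J_i}}\,\big(I^{\otimes ik}\otimes\mathcal{O}\otimes I^{\otimes n-ik-1}\big)$ and $J_i=(ik+1,\ldots,ik+k)$. Then $\mathbf{Var}[T_k]\leq \dfrac{2k\|\mathcal{O}\|^2}{n}$, where $\|\mathcal{O}\|$ is the operator norm.
   Context: For $\pi$ in the symmetric group $\mathfrak{S}_n$, $U_\pi$ is the unitary on $\mathcal{H}^{\otimes n}$ with $U_\pi\ket{\psi_1}\cdots\ket{\psi_n}=\ket{\psi_{\pi^{-1}(1)}}\cdots\ket{\psi_{\pi^{-1}(n)}}$. For a sequence $J=(j_1,\ldots,j_l)$ of distinct elements of $\{1,\ldots,n\}$, $s_J\in\mathfrak{S}_n$ maps $j_t\mapsto j_{t+1}$ for $t<l$, $j_l\mapsto j_1$, and fixes all other elements. For a Hermitian $\mathcal{Q}$ on $\mathcal{H}^{\otimes n}$, $\mathbf{Var}[\mathcal{Q}]=\operatorname{tr}(\mathcal{Q}^2\rho^{\otimes n})-\operatorname{tr}(\mathcal{Q}\rho^{\otimes n})^2$. *)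

theory Defs
  imports Complex_Main "HOL-Library.FuncSet"
begin

text \<open>The Hilbert space H is C^d with orthonormal basis indexed by
 {0..<d}; an operator on H is a function nat => nat => complex (matrix entries, only
 indices < d matter). The n-fold tensor power has orthonormal basis indexed by the
 extensional functions {0..<n} ->E {0..<d}; operators on it are matrices indexed by
 such functions. Tensor factors are numbered 0..n-1 (paper: 1..n).\<close>

type_synonym op1 = "nat \<Rightarrow> nat \<Rightarrow> complex"
type_synonym opn = "(nat \<Rightarrow> nat) \<Rightarrow> (nat \<Rightarrow> nat) \<Rightarrow> complex"

definition basis_idx :: "nat \<Rightarrow> nat \<Rightarrow> (nat \<Rightarrow> nat) set" where
  "basis_idx d n = ({0..<n} \<rightarrow>\<^sub>E {0..<d})"

definition hermitian1 :: "nat \<Rightarrow> op1 \<Rightarrow> bool" where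
  "hermitian1 d A \<longleftrightarrow> (\<forall>i<d. \<forall>j<d. A i j = cnj (A j i))"

definition density1 :: "nat \<Rightarrow> op1 \<Rightarrow> bool" where
  "density1 d \<rho> \<longleftrightarrow> hermitian1 d \<rho>
     \<and> (\<forall>v. 0 \<le> Re (\<Sum>i<d. \<Sum>j<d. cnj (v i) * \<rho> i j * v j))
     \<and> (\<Sum>i<d. \<rho> i i) = 1"

definition opnorm1 :: "nat \<Rightarrow> op1 \<Rightarrow> real" where
  "opnorm1 d A = Sup {sqrt (\<Sum>i<d. (cmod (\<Sum>j<d. A i j * v j))\<^sup>2) | v.
                        (\<Sum>j<d. (cmod (v j))\<^sup>2) = 1}"

definition opmult :: "nat \<Rightarrow> nat \<Rightarrow> opn \<Rightarrow> opn \<Rightarrow> opn" where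
  "opmult d n A B = (\<lambda>f g. \<Sum>h\<in>basis_idx d n. A f h * B h g)"

definition adj :: "opn \<Rightarrow> opn" where
  "adj A = (\<lambda>f g. cnj (A g f))"

definition optrace :: "nat \<Rightarrow> nat \<Rightarrow> opn \<Rightarrow> complex" where
  "optrace d n A = (\<Sum>f\<in>basis_idx d n. A f f)"

definition tensor_pow :: "nat \<Rightarrow> op1 \<Rightarrow> opn" where
  "tensor_pow n \<rho> = (\<lambda>f g. \<Prod>i<n. \<rho> (f i) (g i))"

text \<open>I^{\<otimes>m} \<otimes> Ob \<otimes> I^{\<otimes>(n-m-1)}: Ob acting on factor m (0-based).\<close>
definition local_op :: "nat \<Rightarrow> nat \<Rightarrow> op1 \<Rightarrow> opn" where
  "local_op n m Ob = (\<lambda>f g. if (\<forall>i<n. i \<noteq> m \<longrightarrow> f i = g i) then Ob (f m) (g m) else 0)"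

text \<open>U_pi with U_pi |psi_1..psi_n> = |psi_{pi^-1(1)} .. psi_{pi^-1(n)}>:
  U_pi e_g = e_f with f (pi i) = g i.\<close>
definition perm_op :: "nat \<Rightarrow> (nat \<Rightarrow> nat) \<Rightarrow> opn" where
  "perm_op n \<pi> = (\<lambda>f g. if (\<forall>i<n. f (\<pi> i) = g i) then 1 else 0)"

definition cyc :: "nat \<Rightarrow> nat \<Rightarrow> nat \<Rightarrow> nat" where
  "cyc a k j = (if a \<le> j \<and> j + 1 < a + k then j + 1 else if j + 1 = a + k then a else j)"

definition A_op :: "nat \<Rightarrow> nat \<Rightarrow> nat \<Rightarrow> op1 \<Rightarrow> nat \<Rightarrow> opn" where
  "A_op d n k Ob i = opmult d n (perm_op n (cyc (i * k) k)) (local_op n (i * k) Ob)"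

definition T_op :: "nat \<Rightarrow> nat \<Rightarrow> nat \<Rightarrow> op1 \<Rightarrow> opn" where
  "T_op d n k Ob = (\<lambda>f g. (1 / (2 * of_nat (n div k))) *
      (\<Sum>i<n div k. A_op d n k Ob i f g + adj (A_op d n k Ob i) f g))"

definition variance :: "nat \<Rightarrow> nat \<Rightarrow> op1 \<Rightarrow> opn \<Rightarrow> complex" where
  "variance d n \<rho> Q = optrace d n (opmult d n (opmult d n Q Q) (tensor_pow n \<rho>))
                       - (optrace d n (opmult d n Q (tensor_pow n \<rho>)))\<^sup>2"

end

theory Submission
  imports Defs
begin

definition qf :: "nat \<Rightarrow> op1 \<Rightarrow> (nat \<Rightarrow> complex) \<Rightarrow> complex" where
  "qf d M v = (\<Sum>a<d. \<Sum>b<d. cnj (v a) * M a b * v b)"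

lemma hermD: "hermitian1 d A \<Longrightarrow> i < d \<Longrightarrow> j < d \<Longrightarrow> A i j = cnj (A j i)"
  unfolding hermitian1_def by blast

lemma sum_if_out: "(\<Sum>b\<in>A. if P then f b else 0) = (if P then (\<Sum>b\<in>A. f b) else 0)"
  by (cases P) auto

lemma qf_shift:
  assumes H: "hermitian1 d M" and m: "m < d"
  shows "qf d M (\<lambda>i. v i + (if i = m then t else 0)) =
     qf d M v + cnj t * (\<Sum>b<d. M m b * v b) + cnj (\<Sum>b<d. M m b * v b) * t + cnj t * t * M m m"
proof -
  have e: "cnj (v a + (if a = m then t else 0)) * M a b * (v b + (if b = m then t else 0)) =
     cnj (v a) * M a b * v b + (if b = m then cnj (v a) * M a m * t else 0)
     + (if a = m then cnj t * M m b * v b else 0) + (if a = m then (if b = m then cnj t * t * M m m else 0) else 0)" for a b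
    by (cases "a = m"; cases "b = m") (simp_all add: distrib_left distrib_right)
  have c2: "(\<Sum>a<d. cnj (v a) * M a m * t) = cnj (\<Sum>b<d. M m b * v b) * t"
  proof -
    have "(\<Sum>a<d. cnj (v a) * M a m * t) = (\<Sum>a<d. cnj (M m a * v a) * t)"
    proof (rule sum.cong)
      fix a assume "a \<in> {..<d}"
      then have "M a m = cnj (M m a)" using H m hermD by auto
      then show "cnj (v a) * M a m * t = cnj (M m a * v a) * t" by simp
    qed simp
    also have "\<dots> = cnj (\<Sum>b<d. M m b * v b) * t" by (simp only: sum_distrib_right[symmetric] cnj_sum)
    finally show ?thesis .
  qed
  have "qf d M (\<lambda>i. v i + (if i = m then t else 0)) =
     (\<Sum>a<d. \<Sum>b<d. cnj (v a) * M a b * v b) + (\<Sum>a<d. \<Sum>b<d. (if b = m then cnj (v a) * M a m * t else 0))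
     + (\<Sum>a<d. \<Sum>b<d. (if a = m then cnj t * M m b * v b else 0)) + (\<Sum>a<d. \<Sum>b<d. (if a = m then (if b = m then cnj t * t * M m m else 0) else 0))"
    unfolding qf_def e by (simp only: sum.distrib)
  also have "(\<Sum>a<d. \<Sum>b<d. (if b = m then cnj (v a) * M a m * t else 0)) = cnj (\<Sum>b<d. M m b * v b) * t"
    using m c2 by (simp add: sum.delta')
  also have "(\<Sum>a<d. \<Sum>b<d. (if a = m then cnj t * M m b * v b else 0)) = cnj t * (\<Sum>b<d. M m b * v b)"
    using m by (simp only: sum_if_out sum.delta sum.delta' finite_lessThan lessThan_iff if_True) (simp add: sum_distrib_left mult.assoc)
  also have "(\<Sum>a<d. \<Sum>b<d. (if a = m then (if b = m then cnj t * t * M m m else 0) else 0)) = cnj t * t * M m m"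
    using m by (simp only: sum_if_out sum.delta sum.delta' finite_lessThan lessThan_iff if_True)
  finally show ?thesis unfolding qf_def by simp
qed

definition psd :: "nat \<Rightarrow> op1 \<Rightarrow> bool" where
  "psd d M \<longleftrightarrow> (\<forall>v. 0 \<le> Re (qf d M v))"

lemma qf_zero: "qf d M (\<lambda>i. 0) = 0" by (simp add: qf_def)

lemma qf_delta: assumes "hermitian1 d M" "m < d"
  shows "qf d M (\<lambda>i. if i = m then t else 0) = cnj t * t * M m m"
  using qf_shift[OF assms, of "\<lambda>i. 0" t] by (simp add: qf_zero)

lemma psd_diag: assumes "hermitian1 d M" "psd d M" "m < d"
  shows "M m m = of_real (Re (M m m))" "0 \<le> Re (M m m)"
proof -
  have "M m m = cnj (M m m)" using hermD[OF assms(1) assms(3) assms(3)] .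
  then show "M m m = of_real (Re (M m m))" using complex_eq_iff by auto
  have "0 \<le> Re (qf d M (\<lambda>i. if i = m then 1 else 0))" using assms(2) unfolding psd_def by blast
  then show "0 \<le> Re (M m m)" using qf_delta[OF assms(1) assms(3), of 1] by simp
qed

lemma psd_zero_row: assumes H: "hermitian1 d M" and P: "psd d M" and m: "m < d" and b: "b < d"
  and c0: "M m m = 0"
  shows "M m b = 0"
proof (rule ccontr)
  assume z: "M m b \<noteq> 0"
  then have bm: "b \<noteq> m" using c0 by auto
  define z where "z = M m b"
  define v where "v = (\<lambda>i. if i = b then (1::complex) else 0)"
  define s where "s = (\<bar>Re (M b b)\<bar> + 1) / (2 * (cmod z)\<^sup>2)"
  define t where "t = - z * of_real s"
  have zpos: "0 < cmod z" using z z_def by simp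
  have beta: "(\<Sum>j<d. M m j * v j) = z" using b unfolding v_def z_def by (simp add: if_distrib cong: if_cong)
  have qv: "qf d M v = M b b" unfolding v_def using qf_delta[OF H b, of 1] by simp
  have "qf d M (\<lambda>i. v i + (if i = m then t else 0)) = M b b + cnj t * z + cnj z * t"
    using qf_shift[OF H m, of v t] beta qv c0 by simp
  moreover have "Re (cnj t * z + cnj z * t) = - 2 * s * (cmod z)\<^sup>2"
  proof -
    have "Re (cnj t * z + cnj z * t) = - 2 * s * ((Re z)\<^sup>2 + (Im z)\<^sup>2)"
      unfolding t_def by (simp add: algebra_simps power2_eq_square)
    then show ?thesis by (simp add: cmod_power2)
  qed
  moreover have "2 * s * (cmod z)\<^sup>2 = \<bar>Re (M b b)\<bar> + 1" unfolding s_def using zpos by simp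
  moreover have "0 \<le> Re (qf d M (\<lambda>i. v i + (if i = m then t else 0)))" using P unfolding psd_def by blast
  ultimately show False by simp
qed

lemma chol_step:
  assumes H: "hermitian1 d M" and P: "psd d M" and m: "m < d"
    and Z: "\<forall>a<d. \<forall>b<d. (a < m \<or> b < m) \<longrightarrow> M a b = 0"
    and c: "Re (M m m) > 0"
  defines "rm \<equiv> (\<lambda>a. M a m / of_real (sqrt (Re (M m m))))"
  defines "M' \<equiv> (\<lambda>a b. M a b - rm a * cnj (rm b))"
  shows "hermitian1 d M'" "psd d M'" "\<forall>a<d. \<forall>b<d. (a < Suc m \<or> b < Suc m) \<longrightarrow> M' a b = 0"
proof -
  define s where "s = sqrt (Re (M m m))"
  have s0: "s > 0" using c s_def by simp
  have cs: "M m m = of_real (s * s)" using psd_diag(1)[OF H P m] c s_def by simp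
  have rm_def': "rm a = M a m / of_real s" for a unfolding rm_def s_def by simp
  have crm: "cnj (rm b) = M m b / of_real s" if "b < d" for b
    using hermD[OF H m that] unfolding rm_def' by simp
  show "hermitian1 d M'"
    unfolding hermitian1_def M'_def
  proof (intro allI impI)
    fix i j assume "i < d" "j < d"
    then have "M i j = cnj (M j i)" using hermD[OF H] by blast
    then show "M i j - rm i * cnj (rm j) = cnj (M j i - rm j * cnj (rm i))"
      by simp
  qed
  show "\<forall>a<d. \<forall>b<d. (a < Suc m \<or> b < Suc m) \<longrightarrow> M' a b = 0"
  proof (intro allI impI)
    fix a b assume a: "a < d" and b: "b < d" and ab: "a < Suc m \<or> b < Suc m"
    have rmm: "rm m = of_real s" using cs s0 unfolding rm_def' by (simp add: power2_eq_square)
    show "M' a b = 0"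
    proof (cases "a < m \<or> b < m")
      case True
      then have "M a b = 0" using Z a b by blast
      moreover have "rm a = 0 \<or> rm b = 0" using True Z a b m unfolding rm_def' by auto
      ultimately show ?thesis unfolding M'_def by auto
    next
      case False
      then have "a = m \<or> b = m" using ab by auto
      then show ?thesis
      proof
        assume "a = m"
        then show ?thesis unfolding M'_def using crm[OF b] rmm s0 by simp
      next
        assume bm: "b = m"
        have "cnj (rm m) = of_real s" using rmm by simp
        then show ?thesis unfolding M'_def bm rm_def' using s0 by simp
      qed
    qed
  qed
  show "psd d M'"
    unfolding psd_def
  proof
    fix v
    define \<beta> where "\<beta> = (\<Sum>b<d. M m b * v b)"
    define t where "t = - \<beta> / M m m"
    have q1: "qf d M' v = qf d M v - (\<Sum>a<d. cnj (v a) * rm a) * (\<Sum>b<d. cnj (rm b) * v b)"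
    proof -
      have sp: "(\<Sum>a<d. cnj (v a) * rm a) * (\<Sum>b<d. cnj (rm b) * v b) = (\<Sum>a<d. \<Sum>b<d. cnj (v a) * rm a * (cnj (rm b) * v b))"
        by (rule sum_product)
      have "qf d M' v = (\<Sum>a<d. \<Sum>b<d. cnj (v a) * M a b * v b - cnj (v a) * rm a * (cnj (rm b) * v b))"
        unfolding qf_def M'_def by (simp add: algebra_simps)
      then show ?thesis unfolding sp qf_def by (simp add: sum_subtractf)
    qed
    have q2: "(\<Sum>b<d. cnj (rm b) * v b) = \<beta> / of_real s"
      unfolding \<beta>_def using crm by (simp add: sum_divide_distrib)
    have q3: "(\<Sum>a<d. cnj (v a) * rm a) = cnj \<beta> / of_real s"
    proof -
      have "(\<Sum>a<d. cnj (v a) * rm a) = cnj (\<Sum>a<d. cnj (rm a) * v a)" by (simp add: mult.commute)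
      then show ?thesis using q2 by simp
    qed
    have "qf d M' v = qf d M v - cnj \<beta> * \<beta> / M m m"
      unfolding q1 q2 q3 cs by (simp add: power2_eq_square)
    also have "\<dots> = qf d M (\<lambda>i. v i + (if i = m then t else 0))"
      unfolding qf_shift[OF H m] \<beta>_def[symmetric] t_def cs using s0
      by (simp add: field_simps)
    finally show "0 \<le> Re (qf d M' v)" using P unfolding psd_def by simp
  qed
qed

lemma chol_gen:
  "hermitian1 d M \<Longrightarrow> psd d M \<Longrightarrow> (\<forall>a<d. \<forall>b<d. (a < m \<or> b < m) \<longrightarrow> M a b = 0) \<Longrightarrow> m \<le> d \<Longrightarrow>
   \<exists>r. \<forall>a<d. \<forall>b<d. M a b = (\<Sum>l\<in>{m..<d}. r l a * cnj (r l b))"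
proof (induction "d - m" arbitrary: m M)
  case 0
  then have "m = d" by simp
  then show ?case using 0 by auto
next
  case (Suc q)
  then have m: "m < d" by simp
  have q: "q = d - Suc m" using Suc by simp
  have split: "(\<Sum>l\<in>{m..<d}. r l a * cnj (r l b)) = r m a * cnj (r m b) + (\<Sum>l\<in>{Suc m..<d}. r l a * cnj (r l b))" for r a b
    using m by (simp add: sum.atLeast_Suc_lessThan)
  show ?case
  proof (cases "Re (M m m) > 0")
    case True
    define rm where "rm = (\<lambda>a. M a m / of_real (sqrt (Re (M m m))))"
    define M' where "M' = (\<lambda>a b. M a b - rm a * cnj (rm b))"
    have st: "hermitian1 d M'" "psd d M'" "\<forall>a<d. \<forall>b<d. (a < Suc m \<or> b < Suc m) \<longrightarrow> M' a b = 0"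
      using chol_step[OF Suc.prems(1) Suc.prems(2) m Suc.prems(3) True] unfolding M'_def rm_def by blast+
    obtain r where r: "\<forall>a<d. \<forall>b<d. M' a b = (\<Sum>l\<in>{Suc m..<d}. r l a * cnj (r l b))"
      using Suc.hyps(1)[OF q st] m by auto
    show ?thesis
    proof (intro exI allI impI)
      fix a b assume "a < d" "b < d"
      then have "M a b = M' a b + rm a * cnj (rm b)" unfolding M'_def by simp
      also have "\<dots> = (\<Sum>l\<in>{m..<d}. (r(m := rm)) l a * cnj ((r(m := rm)) l b))"
        unfolding split using r \<open>a < d\<close> \<open>b < d\<close> by simp
      finally show "M a b = (\<Sum>l\<in>{m..<d}. (r(m := rm)) l a * cnj ((r(m := rm)) l b))" .
    qed
  next
    case False
    then have c0: "M m m = 0" using psd_diag[OF Suc.prems(1) Suc.prems(2) m] by (metis less_eq_real_def of_real_0)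
    have row: "M m b = 0" if "b < d" for b using psd_zero_row[OF Suc.prems(1) Suc.prems(2) m that c0] .
    have col: "M b m = 0" if "b < d" for b using hermD[OF Suc.prems(1) that m] row[OF that] by simp
    have Z: "\<forall>a<d. \<forall>b<d. (a < Suc m \<or> b < Suc m) \<longrightarrow> M a b = 0"
      using Suc.prems(3) row col by (metis less_Suc_eq)
    obtain r where r: "\<forall>a<d. \<forall>b<d. M a b = (\<Sum>l\<in>{Suc m..<d}. r l a * cnj (r l b))"
      using Suc.hyps(1)[OF q Suc.prems(1) Suc.prems(2) Z] m by auto
    show ?thesis
    proof (intro exI allI impI)
      fix a b assume "a < d" "b < d"
      then show "M a b = (\<Sum>l\<in>{m..<d}. (r(m := (\<lambda>_. 0))) l a * cnj ((r(m := (\<lambda>_. 0))) l b))"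
        unfolding split using r by simp
    qed
  qed
qed

lemma gram:
  assumes "density1 d \<rho>"
  shows "\<exists>r. \<forall>a<d. \<forall>b<d. \<rho> a b = (\<Sum>l<d. r l a * cnj (r l b))"
proof -
  have H: "hermitian1 d \<rho>" and P: "psd d \<rho>" using assms unfolding density1_def psd_def qf_def by auto
  show ?thesis using chol_gen[OF H P, of 0] by (simp add: atLeast0LessThan)
qed

definition merge :: "nat set \<Rightarrow> (nat \<Rightarrow> nat) \<Rightarrow> (nat \<Rightarrow> nat) \<Rightarrow> nat \<Rightarrow> nat" where
  "merge S a c = (\<lambda>j. if j \<in> S then a j else c j)"

lemma restrict_merge1: "a \<in> S \<rightarrow>\<^sub>E D \<Longrightarrow> restrict (merge S a c) S = a"
  unfolding merge_def by (auto simp: fun_eq_iff PiE_iff extensional_def)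

lemma restrict_merge2: "c \<in> (N - S) \<rightarrow>\<^sub>E D \<Longrightarrow> restrict (merge S a c) (N - S) = c"
  unfolding merge_def by (auto simp: fun_eq_iff PiE_iff extensional_def)

lemma merge_restrict: "S \<subseteq> N \<Longrightarrow> f \<in> N \<rightarrow>\<^sub>E D \<Longrightarrow> merge S (restrict f S) (restrict f (N - S)) = f"
  unfolding merge_def by (auto simp: fun_eq_iff PiE_iff extensional_def)

lemma merge_in: "S \<subseteq> N \<Longrightarrow> a \<in> S \<rightarrow>\<^sub>E D \<Longrightarrow> c \<in> (N - S) \<rightarrow>\<^sub>E D \<Longrightarrow> merge S a c \<in> N \<rightarrow>\<^sub>E D"
  unfolding merge_def by (auto simp: PiE_iff extensional_def)

lemma split_sum:
  assumes S: "S \<subseteq> N"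
  shows "(\<Sum>f \<in> N \<rightarrow>\<^sub>E D. F f) = (\<Sum>a \<in> S \<rightarrow>\<^sub>E D. \<Sum>c \<in> (N - S) \<rightarrow>\<^sub>E D. F (merge S a c))"
proof -
  have "(\<Sum>a \<in> S \<rightarrow>\<^sub>E D. \<Sum>c \<in> (N - S) \<rightarrow>\<^sub>E D. F (merge S a c)) =
        (\<Sum>(a,c) \<in> (S \<rightarrow>\<^sub>E D) \<times> ((N - S) \<rightarrow>\<^sub>E D). F (merge S a c))"
    by (rule sum.cartesian_product)
  also have "\<dots> = (\<Sum>f \<in> N \<rightarrow>\<^sub>E D. F f)"
    by (rule sum.reindex_bij_witness[of _ "\<lambda>f. (restrict f S, restrict f (N - S))" "\<lambda>(a,c). merge S a c"])
       (use S in \<open>auto simp: restrict_merge1 restrict_merge2 merge_restrict[OF S] merge_def PiE_iff extensional_def\<close>)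
  finally show ?thesis by simp
qed

definition locS :: "nat \<Rightarrow> nat \<Rightarrow> nat set \<Rightarrow> opn \<Rightarrow> bool" where
  "locS d n S X \<longleftrightarrow> (\<exists>x. \<forall>f\<in>basis_idx d n. \<forall>g\<in>basis_idx d n.
      X f g = (if (\<forall>j\<in>{..<n} - S. f j = g j) then x (restrict f S) (restrict g S) else 0))"

definition Expv :: "nat \<Rightarrow> nat \<Rightarrow> op1 \<Rightarrow> opn \<Rightarrow> complex" where
  "Expv d n \<rho> X = (\<Sum>f\<in>basis_idx d n. \<Sum>h\<in>basis_idx d n. X f h * tensor_pow n \<rho> h f)"

lemma basis_idx_eq: "basis_idx d n = {..<n} \<rightarrow>\<^sub>E {0..<d}"
  unfolding basis_idx_def by (simp add: atLeast0LessThan)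

lemma sum4_prod:
  fixes F G :: "_ \<Rightarrow> _ \<Rightarrow> complex"
  shows "(\<Sum>a\<in>A. \<Sum>c\<in>C. \<Sum>b\<in>B. \<Sum>e\<in>E. F a b * G c e) = (\<Sum>a\<in>A. \<Sum>b\<in>B. F a b) * (\<Sum>c\<in>C. \<Sum>e\<in>E. G c e)"
proof -
  have "(\<Sum>a\<in>A. \<Sum>c\<in>C. \<Sum>b\<in>B. \<Sum>e\<in>E. F a b * G c e) = (\<Sum>a\<in>A. \<Sum>b\<in>B. \<Sum>c\<in>C. \<Sum>e\<in>E. F a b * G c e)"
    by (rule sum.cong[OF refl], rule sum.swap)
  also have "\<dots> = (\<Sum>a\<in>A. \<Sum>b\<in>B. F a b * (\<Sum>c\<in>C. \<Sum>e\<in>E. G c e))"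
    by (simp add: sum_distrib_left)
  also have "\<dots> = (\<Sum>a\<in>A. \<Sum>b\<in>B. F a b) * (\<Sum>c\<in>C. \<Sum>e\<in>E. G c e)"
    by (simp add: sum_distrib_right)
  finally show ?thesis .
qed

lemma tp_merge:
  assumes S: "S \<subseteq> {..<n}"
  shows "tensor_pow n \<rho> (merge S b e) (merge S a c) =
     (\<Prod>j\<in>S. \<rho> (b j) (a j)) * (\<Prod>j\<in>{..<n} - S. \<rho> (e j) (c j))"
proof -
  have "tensor_pow n \<rho> (merge S b e) (merge S a c) = (\<Prod>j\<in>{..<n} - S. \<rho> (merge S b e j) (merge S a c j)) * (\<Prod>j\<in>S. \<rho> (merge S b e j) (merge S a c j))"
    unfolding tensor_pow_def using S by (simp add: prod.subset_diff)
  also have "\<dots> = (\<Prod>j\<in>{..<n} - S. \<rho> (e j) (c j)) * (\<Prod>j\<in>S. \<rho> (b j) (a j))"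
    unfolding merge_def by (intro arg_cong2[where f="(*)"] prod.cong) auto
  finally show ?thesis by (simp add: mult.commute)
qed

lemma Ex_split:
  assumes S: "S \<subseteq> {..<n}"
  shows "Expv d n \<rho> Z = (\<Sum>a\<in>S \<rightarrow>\<^sub>E {0..<d}. \<Sum>c\<in>({..<n} - S) \<rightarrow>\<^sub>E {0..<d}. \<Sum>b\<in>S \<rightarrow>\<^sub>E {0..<d}. \<Sum>e\<in>({..<n} - S) \<rightarrow>\<^sub>E {0..<d}.
      Z (merge S a c) (merge S b e) * ((\<Prod>j\<in>S. \<rho> (b j) (a j)) * (\<Prod>j\<in>{..<n} - S. \<rho> (e j) (c j))))"
  unfolding Expv_def basis_idx_eq split_sum[OF S] tp_merge[OF S] ..

lemma opmult_split:
  assumes S: "S \<subseteq> {..<n}"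
  shows "opmult d n X Y f g = (\<Sum>a\<in>S \<rightarrow>\<^sub>E {0..<d}. \<Sum>c\<in>({..<n} - S) \<rightarrow>\<^sub>E {0..<d}. X f (merge S a c) * Y (merge S a c) g)"
  unfolding opmult_def basis_idx_eq split_sum[OF S] ..

lemma cond_C:
  assumes "c \<in> ({..<n} - S) \<rightarrow>\<^sub>E D" "e \<in> ({..<n} - S) \<rightarrow>\<^sub>E D"
  shows "(\<forall>j\<in>{..<n} - S. merge S a c j = merge S b e j) \<longleftrightarrow> c = e"
proof -
  have "(\<forall>j\<in>{..<n} - S. merge S a c j = merge S b e j) \<longleftrightarrow> (\<forall>j\<in>{..<n} - S. c j = e j)"
    unfolding merge_def by auto
  also have "\<dots> \<longleftrightarrow> c = e" using assms by (auto intro: PiE_ext)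
  finally show ?thesis .
qed

lemma cond_S:
  assumes "S \<subseteq> {..<n}" "a \<in> S \<rightarrow>\<^sub>E D" "b \<in> S \<rightarrow>\<^sub>E D"
  shows "(\<forall>j\<in>{..<n} - ({..<n} - S). merge S a c j = merge S b e j) \<longleftrightarrow> a = b"
proof -
  have "(\<forall>j\<in>{..<n} - ({..<n} - S). merge S a c j = merge S b e j) \<longleftrightarrow> (\<forall>j\<in>S. a j = b j)"
    using assms(1) unfolding merge_def by auto
  also have "\<dots> \<longleftrightarrow> a = b" using assms(2,3) by (auto intro: PiE_ext)
  finally show ?thesis .
qed

lemma locS_merge1:
  assumes S: "S \<subseteq> {..<n}" and x: "\<forall>f\<in>basis_idx d n. \<forall>g\<in>basis_idx d n.
      X f g = (if (\<forall>j\<in>{..<n} - S. f j = g j) then x (restrict f S) (restrict g S) else 0)"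
    and a: "a \<in> S \<rightarrow>\<^sub>E {0..<d}" and b: "b \<in> S \<rightarrow>\<^sub>E {0..<d}"
    and c: "c \<in> ({..<n} - S) \<rightarrow>\<^sub>E {0..<d}" and e: "e \<in> ({..<n} - S) \<rightarrow>\<^sub>E {0..<d}"
  shows "X (merge S a c) (merge S b e) = (if c = e then x a b else 0)"
proof -
  have "merge S a c \<in> basis_idx d n" "merge S b e \<in> basis_idx d n"
    unfolding basis_idx_eq using merge_in[OF S] a b c e by auto
  then show ?thesis using x cond_C[OF c e] restrict_merge1[OF a] restrict_merge1[OF b] by simp
qed

lemma locS_merge2:
  assumes S: "S \<subseteq> {..<n}" and y: "\<forall>f\<in>basis_idx d n. \<forall>g\<in>basis_idx d n.
      Y f g = (if (\<forall>j\<in>{..<n} - ({..<n} - S). f j = g j) then y (restrict f ({..<n} - S)) (restrict g ({..<n} - S)) else 0)"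
    and a: "a \<in> S \<rightarrow>\<^sub>E {0..<d}" and b: "b \<in> S \<rightarrow>\<^sub>E {0..<d}"
    and c: "c \<in> ({..<n} - S) \<rightarrow>\<^sub>E {0..<d}" and e: "e \<in> ({..<n} - S) \<rightarrow>\<^sub>E {0..<d}"
  shows "Y (merge S a c) (merge S b e) = (if a = b then y c e else 0)"
proof -
  have "merge S a c \<in> basis_idx d n" "merge S b e \<in> basis_idx d n"
    unfolding basis_idx_eq using merge_in[OF S] a b c e by auto
  then show ?thesis using y cond_S[OF S a b] restrict_merge2[OF c] restrict_merge2[OF e] by simp
qed

lemma sum_if_out': "(\<Sum>b\<in>A. if P then f b else 0) = (if P then (\<Sum>b\<in>A. f b) else 0)"
  by (cases P) auto

lemma trace_prod_one:
  fixes \<rho> :: op1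
  assumes tr: "(\<Sum>t<d. \<rho> t t) = 1" and fin: "finite T"
  shows "(\<Sum>c\<in>T \<rightarrow>\<^sub>E {0..<d}. \<Prod>j\<in>T. \<rho> (c j) (c j)) = 1"
proof -
  have "(\<Sum>c\<in>T \<rightarrow>\<^sub>E {0..<d}. \<Prod>j\<in>T. \<rho> (c j) (c j)) = (\<Prod>j\<in>T. \<Sum>t\<in>{0..<d}. \<rho> t t)"
    using prod_sum_PiE[where f="\<lambda>j t. \<rho> t t" and A=T and B="\<lambda>_. {0..<d}"] fin by simp
  also have "\<dots> = 1" using tr by (simp add: atLeast0LessThan)
  finally show ?thesis .
qed

lemma indep:
  assumes S: "S \<subseteq> {..<n}" and LX: "locS d n S X" and LY: "locS d n ({..<n} - S) Y"
    and tr: "(\<Sum>t<d. \<rho> t t) = 1"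
  shows "Expv d n \<rho> (opmult d n X Y) = Expv d n \<rho> X * Expv d n \<rho> Y"
proof -
  let ?BS = "S \<rightarrow>\<^sub>E {0..<d}" and ?BC = "({..<n} - S) \<rightarrow>\<^sub>E {0..<d}"
  let ?pS = "\<lambda>b a. (\<Prod>j\<in>S. \<rho> (b j) (a j))" and ?pC = "\<lambda>e c. (\<Prod>j\<in>{..<n} - S. \<rho> (e j) (c j))"
  obtain x where x: "\<forall>f\<in>basis_idx d n. \<forall>g\<in>basis_idx d n.
      X f g = (if (\<forall>j\<in>{..<n} - S. f j = g j) then x (restrict f S) (restrict g S) else 0)"
    using LX unfolding locS_def by blast
  obtain y where y: "\<forall>f\<in>basis_idx d n. \<forall>g\<in>basis_idx d n.
      Y f g = (if (\<forall>j\<in>{..<n} - ({..<n} - S). f j = g j) then y (restrict f ({..<n} - S)) (restrict g ({..<n} - S)) else 0)"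
    using LY unfolding locS_def by blast
  note X1 = locS_merge1[OF S x] and Y1 = locS_merge2[OF S y]
  have finS0: "finite S" using S finite_subset by blast
  have finS: "finite ?BS" and finC: "finite ?BC" using finS0 by (auto intro!: finite_PiE)
  have XY: "opmult d n X Y (merge S a c) (merge S b e) = x a b * y c e"
    if a: "a \<in> ?BS" and b: "b \<in> ?BS" and c: "c \<in> ?BC" and e: "e \<in> ?BC" for a b c e
  proof -
    have "opmult d n X Y (merge S a c) (merge S b e) =
       (\<Sum>a'\<in>?BS. \<Sum>c'\<in>?BC. X (merge S a c) (merge S a' c') * Y (merge S a' c') (merge S b e))"
      by (rule opmult_split[OF S])
    also have "\<dots> = (\<Sum>a'\<in>?BS. \<Sum>c'\<in>?BC. if a' = b then (if c' = c then x a b * y c e else 0) else 0)"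
      by (intro sum.cong refl) (auto simp: X1[OF a _ c] Y1[OF _ b _ e])
    also have "\<dots> = x a b * y c e"
      using b c finS finC by (simp only: sum_if_out' sum.delta) simp
    finally show ?thesis .
  qed
  have "Expv d n \<rho> (opmult d n X Y) = (\<Sum>a\<in>?BS. \<Sum>c\<in>?BC. \<Sum>b\<in>?BS. \<Sum>e\<in>?BC. (x a b * ?pS b a) * (y c e * ?pC e c))"
    unfolding Ex_split[OF S] by (intro sum.cong refl) (simp add: XY mult_ac)
  also have "\<dots> = (\<Sum>a\<in>?BS. \<Sum>b\<in>?BS. x a b * ?pS b a) * (\<Sum>c\<in>?BC. \<Sum>e\<in>?BC. y c e * ?pC e c)"
    by (rule sum4_prod)
  finally have E1: "Expv d n \<rho> (opmult d n X Y) = (\<Sum>a\<in>?BS. \<Sum>b\<in>?BS. x a b * ?pS b a) * (\<Sum>c\<in>?BC. \<Sum>e\<in>?BC. y c e * ?pC e c)" .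
  have "Expv d n \<rho> X = (\<Sum>a\<in>?BS. \<Sum>c\<in>?BC. \<Sum>b\<in>?BS. \<Sum>e\<in>?BC. (x a b * ?pS b a) * (if e = c then ?pC e c else 0))"
    unfolding Ex_split[OF S] by (intro sum.cong refl) (simp add: X1 mult_ac)
  also have "\<dots> = (\<Sum>a\<in>?BS. \<Sum>b\<in>?BS. x a b * ?pS b a) * (\<Sum>c\<in>?BC. \<Sum>e\<in>?BC. (if e = c then ?pC e c else 0))"
    by (rule sum4_prod)
  also have "(\<Sum>c\<in>?BC. \<Sum>e\<in>?BC. (if e = c then ?pC e c else 0)) = (\<Sum>c\<in>?BC. ?pC c c)"
    using finC by simp
  also have "\<dots> = 1" using trace_prod_one[where \<rho>=\<rho> and d=d and T="{..<n} - S", OF tr] by simp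
  finally have E2: "Expv d n \<rho> X = (\<Sum>a\<in>?BS. \<Sum>b\<in>?BS. x a b * ?pS b a)" by simp
  have "Expv d n \<rho> Y = (\<Sum>a\<in>?BS. \<Sum>c\<in>?BC. \<Sum>b\<in>?BS. \<Sum>e\<in>?BC. (if b = a then ?pS b a else 0) * (y c e * ?pC e c))"
    unfolding Ex_split[OF S] by (intro sum.cong refl) (simp add: Y1 mult_ac)
  also have "\<dots> = (\<Sum>a\<in>?BS. \<Sum>b\<in>?BS. (if b = a then ?pS b a else 0)) * (\<Sum>c\<in>?BC. \<Sum>e\<in>?BC. y c e * ?pC e c)"
    by (rule sum4_prod)
  also have "(\<Sum>a\<in>?BS. \<Sum>b\<in>?BS. (if b = a then ?pS b a else 0)) = (\<Sum>a\<in>?BS. ?pS a a)"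
    using finS by simp
  also have "\<dots> = 1" using trace_prod_one[where \<rho>=\<rho> and d=d, OF tr finS0] by simp
  finally have E3: "Expv d n \<rho> Y = (\<Sum>c\<in>?BC. \<Sum>e\<in>?BC. y c e * ?pC e c)" by simp
  show ?thesis using E1 E2 E3 by simp
qed

lemma locS_adj: "locS d n S X \<Longrightarrow> locS d n S (adj X)"
  unfolding locS_def adj_def
proof -
  assume "\<exists>x. \<forall>f\<in>basis_idx d n. \<forall>g\<in>basis_idx d n. X f g = (if \<forall>j\<in>{..<n} - S. f j = g j then x (restrict f S) (restrict g S) else 0)"
  then obtain x where x: "\<forall>f\<in>basis_idx d n. \<forall>g\<in>basis_idx d n. X f g = (if \<forall>j\<in>{..<n} - S. f j = g j then x (restrict f S) (restrict g S) else 0)" by blast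
  show "\<exists>x. \<forall>f\<in>basis_idx d n. \<forall>g\<in>basis_idx d n. cnj (X g f) = (if \<forall>j\<in>{..<n} - S. f j = g j then x (restrict f S) (restrict g S) else 0)"
  proof (intro exI ballI)
    fix f g assume "f \<in> basis_idx d n" "g \<in> basis_idx d n"
    show "cnj (X g f) = (if \<forall>j\<in>{..<n} - S. f j = g j then (\<lambda>a b. cnj (x b a)) (restrict f S) (restrict g S) else 0)"
    proof -
      have c: "(\<forall>j\<in>{..<n} - S. g j = f j) = (\<forall>j\<in>{..<n} - S. f j = g j)" by auto
      show ?thesis using x \<open>f \<in> basis_idx d n\<close> \<open>g \<in> basis_idx d n\<close> by (simp add: c)
    qed
  qed
qed

lemma locS_add: "locS d n S X \<Longrightarrow> locS d n S Y \<Longrightarrow> locS d n S (\<lambda>f g. X f g + Y f g)"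
proof -
  assume "locS d n S X" "locS d n S Y"
  then obtain x y where x: "\<forall>f\<in>basis_idx d n. \<forall>g\<in>basis_idx d n. X f g = (if \<forall>j\<in>{..<n} - S. f j = g j then x (restrict f S) (restrict g S) else 0)"
    and y: "\<forall>f\<in>basis_idx d n. \<forall>g\<in>basis_idx d n. Y f g = (if \<forall>j\<in>{..<n} - S. f j = g j then y (restrict f S) (restrict g S) else 0)"
    unfolding locS_def by blast
  show ?thesis unfolding locS_def
  proof (intro exI ballI)
    fix f g assume "f \<in> basis_idx d n" "g \<in> basis_idx d n"
    then show "X f g + Y f g = (if \<forall>j\<in>{..<n} - S. f j = g j then (\<lambda>a b. x a b + y a b) (restrict f S) (restrict g S) else 0)"
      using x y by auto
  qed
qed

lemma locS_mono: assumes SS: "S \<subseteq> S'" and SN: "S' \<subseteq> {..<n}" and LX: "locS d n S X" shows "locS d n S' X"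
proof -
  obtain x where x: "\<forall>f\<in>basis_idx d n. \<forall>g\<in>basis_idx d n. X f g = (if \<forall>j\<in>{..<n} - S. f j = g j then x (restrict f S) (restrict g S) else 0)"
    using LX unfolding locS_def by blast
  show ?thesis unfolding locS_def
  proof (intro exI ballI)
    fix f g assume "f \<in> basis_idx d n" "g \<in> basis_idx d n"
    have r: "restrict (restrict h S') S = restrict h S" for h :: "nat \<Rightarrow> nat"
      using SS by (auto simp: fun_eq_iff restrict_def)
    have "(\<forall>j\<in>{..<n} - S. f j = g j) \<longleftrightarrow> (\<forall>j\<in>{..<n} - S'. f j = g j) \<and> (\<forall>j\<in>S' - S. restrict f S' j = restrict g S' j)"
      using SS SN by auto
    then show "X f g = (if \<forall>j\<in>{..<n} - S'. f j = g j then
        (\<lambda>a b. if (\<forall>j\<in>S' - S. a j = b j) then x (restrict a S) (restrict b S) else 0) (restrict f S') (restrict g S') else 0)"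
      using x \<open>f \<in> basis_idx d n\<close> \<open>g \<in> basis_idx d n\<close> by (simp add: r Int_absorb1[OF SS])
  qed
qed

definition cinv :: "nat \<Rightarrow> nat \<Rightarrow> nat \<Rightarrow> nat" where
  "cinv a k j = (if a < j \<and> j < a + k then j - 1 else if j = a then a + k - 1 else j)"

lemma cyc_cinv: "1 \<le> k \<Longrightarrow> cyc a k (cinv a k j) = j"
  unfolding cyc_def cinv_def by auto

lemma cinv_cyc: "1 \<le> k \<Longrightarrow> cinv a k (cyc a k j) = j"
  unfolding cyc_def cinv_def by auto

lemma cyc_lt: "1 \<le> k \<Longrightarrow> a + k \<le> n \<Longrightarrow> j < n \<Longrightarrow> cyc a k j < n"
  unfolding cyc_def by auto

lemma cinv_lt: "1 \<le> k \<Longrightarrow> a + k \<le> n \<Longrightarrow> j < n \<Longrightarrow> cinv a k j < n"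
  unfolding cinv_def by auto

lemma cyc_in: "j \<in> {a..<a+k} \<Longrightarrow> cyc a k j \<in> {a..<a+k}"
  unfolding cyc_def by auto

lemma cyc_out: "1 \<le> k \<Longrightarrow> j \<notin> {a..<a+k} \<Longrightarrow> cyc a k j = j"
  unfolding cyc_def by auto

definition sig :: "nat \<Rightarrow> nat \<Rightarrow> nat \<Rightarrow> (nat \<Rightarrow> nat) \<Rightarrow> (nat \<Rightarrow> nat)" where
  "sig a k n f = restrict (\<lambda>j. f (cyc a k j)) {..<n}"

definition sig' :: "nat \<Rightarrow> nat \<Rightarrow> nat \<Rightarrow> (nat \<Rightarrow> nat) \<Rightarrow> (nat \<Rightarrow> nat)" where
  "sig' a k n f = restrict (\<lambda>j. f (cinv a k j)) {..<n}"

lemma sig_in: "1 \<le> k \<Longrightarrow> a + k \<le> n \<Longrightarrow> f \<in> basis_idx d n \<Longrightarrow> sig a k n f \<in> basis_idx d n"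
  unfolding basis_idx_eq sig_def using cyc_lt by (auto simp: PiE_iff)

lemma sig'_in: "1 \<le> k \<Longrightarrow> a + k \<le> n \<Longrightarrow> f \<in> basis_idx d n \<Longrightarrow> sig' a k n f \<in> basis_idx d n"
  unfolding basis_idx_eq sig'_def using cinv_lt by (auto simp: PiE_iff)

lemma sig'_sig: "1 \<le> k \<Longrightarrow> a + k \<le> n \<Longrightarrow> f \<in> basis_idx d n \<Longrightarrow> sig' a k n (sig a k n f) = f"
  unfolding basis_idx_eq sig_def sig'_def
  by (auto simp: fun_eq_iff PiE_iff extensional_def cinv_lt cyc_cinv)

lemma sig_sig': "1 \<le> k \<Longrightarrow> a + k \<le> n \<Longrightarrow> f \<in> basis_idx d n \<Longrightarrow> sig a k n (sig' a k n f) = f"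
  unfolding basis_idx_eq sig_def sig'_def
  by (auto simp: fun_eq_iff PiE_iff extensional_def cyc_lt cinv_cyc)

lemma perm_mult:
  assumes k: "1 \<le> k" and ak: "a + k \<le> n" and f: "f \<in> basis_idx d n"
  shows "opmult d n (perm_op n (cyc a k)) Z f g = Z (sig a k n f) g"
proof -
  have "perm_op n (cyc a k) f h = (if h = sig a k n f then 1 else 0)" if h: "h \<in> basis_idx d n" for h
  proof -
    have "(\<forall>i<n. f (cyc a k i) = h i) \<longleftrightarrow> h = sig a k n f"
      using h unfolding basis_idx_eq sig_def by (auto simp: fun_eq_iff PiE_iff extensional_def)
    then show ?thesis unfolding perm_op_def by simp
  qed
  then have "opmult d n (perm_op n (cyc a k)) Z f g = (\<Sum>h\<in>basis_idx d n. if h = sig a k n f then Z h g else 0)"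
    unfolding opmult_def by (intro sum.cong refl) auto
  also have "\<dots> = Z (sig a k n f) g"
    using sig_in[OF k ak f] by (simp add: basis_idx_def finite_PiE)
  finally show ?thesis .
qed

lemma A_rep:
  assumes "1 \<le> k" "i * k + k \<le> n" "f \<in> basis_idx d n"
  shows "A_op d n k Ob i f g = local_op n (i * k) Ob (sig (i * k) k n f) g"
  unfolding A_op_def using perm_mult[OF assms] .

lemma A_loc:
  assumes ik: "i * k + k \<le> n" and k: "1 \<le> k"
  shows "locS d n {i*k..<i*k+k} (A_op d n k Ob i)"
  unfolding locS_def
proof (intro exI ballI)
  let ?J = "{i*k..<i*k+k}" and ?m = "i * k"
  fix f g assume f: "f \<in> basis_idx d n" and g: "g \<in> basis_idx d n"
  have mJ: "?m \<in> ?J" using k by auto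
  have JN: "?J \<subseteq> {..<n}" using ik by auto
  have c1: "(\<forall>j<n. j \<noteq> ?m \<longrightarrow> sig ?m k n f j = g j) \<longleftrightarrow>
     (\<forall>j\<in>{..<n} - ?J. f j = g j) \<and> (\<forall>j\<in>?J. j \<noteq> ?m \<longrightarrow> restrict f ?J (cyc ?m k j) = restrict g ?J j)"
  proof -
    have "(\<forall>j<n. j \<noteq> ?m \<longrightarrow> sig ?m k n f j = g j) \<longleftrightarrow> (\<forall>j<n. j \<noteq> ?m \<longrightarrow> f (cyc ?m k j) = g j)"
      unfolding sig_def by auto
    also have "\<dots> \<longleftrightarrow> (\<forall>j\<in>{..<n} - ?J. f j = g j) \<and> (\<forall>j\<in>?J. j \<noteq> ?m \<longrightarrow> f (cyc ?m k j) = g j)"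
      using cyc_out[OF k, of _ ?m] JN mJ by (auto) 
    also have "\<dots> \<longleftrightarrow> (\<forall>j\<in>{..<n} - ?J. f j = g j) \<and> (\<forall>j\<in>?J. j \<noteq> ?m \<longrightarrow> restrict f ?J (cyc ?m k j) = restrict g ?J j)"
      using cyc_in[of _ ?m k] by auto
    finally show ?thesis .
  qed
  have c2: "sig ?m k n f ?m = restrict f ?J (cyc ?m k ?m)" "g ?m = restrict g ?J ?m"
    using mJ JN cyc_in[OF mJ] unfolding sig_def by auto
  show "A_op d n k Ob i f g = (if \<forall>j\<in>{..<n} - ?J. f j = g j then
     (\<lambda>a b. if (\<forall>j\<in>?J. j \<noteq> ?m \<longrightarrow> a (cyc ?m k j) = b j) then Ob (a (cyc ?m k ?m)) (b ?m) else 0) (restrict f ?J) (restrict g ?J) else 0)"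
    unfolding A_rep[OF k ik f] local_op_def using c1 c2 by auto
qed

lemma opnorm_bound:
  fixes Ob :: op1 and w :: "nat \<Rightarrow> complex"
  shows "(\<Sum>s<d. (cmod (\<Sum>t<d. Ob s t * w t))\<^sup>2) \<le> (opnorm1 d Ob)\<^sup>2 * (\<Sum>t<d. (cmod (w t))\<^sup>2)"
proof -
  define K where "K = {sqrt (\<Sum>i<d. (cmod (\<Sum>j<d. Ob i j * v j))\<^sup>2) | v. (\<Sum>j<d. (cmod (v j))\<^sup>2) = 1}"
  have on: "opnorm1 d Ob = Sup K" unfolding opnorm1_def K_def ..
  define B where "B = sqrt (\<Sum>s<d. (\<Sum>t<d. cmod (Ob s t))\<^sup>2)"
  have bdd: "bdd_above K"
  proof (rule bdd_aboveI[of _ B])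
    fix x assume "x \<in> K"
    then obtain v where x: "x = sqrt (\<Sum>i<d. (cmod (\<Sum>j<d. Ob i j * v j))\<^sup>2)" and v: "(\<Sum>j<d. (cmod (v j))\<^sup>2) = 1"
      unfolding K_def by blast
    have vt: "cmod (v t) \<le> 1" if "t < d" for t
    proof -
      have "(cmod (v t))\<^sup>2 \<le> (\<Sum>j<d. (cmod (v j))\<^sup>2)"
        by (rule member_le_sum) (use that in auto)
      then have "(cmod (v t))\<^sup>2 \<le> 1\<^sup>2" using v by simp
      then show ?thesis by (rule power2_le_imp_le) simp
    qed
    have "cmod (\<Sum>j<d. Ob i j * v j) \<le> (\<Sum>t<d. cmod (Ob i t))" for i
    proof -
      have "cmod (\<Sum>j<d. Ob i j * v j) \<le> (\<Sum>j<d. cmod (Ob i j * v j))" by (rule norm_sum)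
      also have "\<dots> \<le> (\<Sum>t<d. cmod (Ob i t))"
        by (rule sum_mono) (use vt in \<open>auto simp: norm_mult intro: mult_left_le\<close>)
      finally show ?thesis .
    qed
    then have "(\<Sum>i<d. (cmod (\<Sum>j<d. Ob i j * v j))\<^sup>2) \<le> (\<Sum>s<d. (\<Sum>t<d. cmod (Ob s t))\<^sup>2)"
      by (intro sum_mono power_mono) auto
    then show "x \<le> B" unfolding x B_def by simp
  qed
  define nw where "nw = (\<Sum>t<d. (cmod (w t))\<^sup>2)"
  show ?thesis
  proof (cases "nw = 0")
    case True
    then have "w t = 0" if "t < d" for t
      using that sum_nonneg_eq_0_iff[of "{..<d}" "\<lambda>t. (cmod (w t))\<^sup>2"] unfolding nw_def by auto
    then have "(\<Sum>s<d. (cmod (\<Sum>t<d. Ob s t * w t))\<^sup>2) = 0" by simp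
    then show ?thesis using True by (simp add: nw_def[symmetric])
  next
    case False
    then have nwp: "nw > 0" unfolding nw_def by (simp add: sum_nonneg order_le_neq_trans)
    define v where "v = (\<lambda>t. w t / of_real (sqrt nw))"
    have "(\<Sum>j<d. (cmod (v j))\<^sup>2) = (\<Sum>j<d. (cmod (w j))\<^sup>2 / nw)"
      unfolding v_def using nwp by (simp add: norm_divide power_divide)
    also have "\<dots> = 1" using nwp unfolding nw_def[symmetric] sum_divide_distrib[symmetric] by simp
    finally have v1: "(\<Sum>j<d. (cmod (v j))\<^sup>2) = 1" .
    have ov: "(\<Sum>j<d. Ob i j * v j) = (\<Sum>j<d. Ob i j * w j) / of_real (sqrt nw)" for i
      unfolding v_def by (simp add: sum_divide_distrib)
    have "sqrt (\<Sum>i<d. (cmod (\<Sum>j<d. Ob i j * v j))\<^sup>2) \<in> K" unfolding K_def using v1 by blast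
    then have "sqrt (\<Sum>i<d. (cmod (\<Sum>j<d. Ob i j * v j))\<^sup>2) \<le> opnorm1 d Ob"
      unfolding on using bdd by (rule cSup_upper)
    moreover have "(\<Sum>i<d. (cmod (\<Sum>j<d. Ob i j * v j))\<^sup>2) = (\<Sum>s<d. (cmod (\<Sum>t<d. Ob s t * w t))\<^sup>2) / nw"
    proof -
      have q: "(cmod (X / of_real (sqrt nw)))\<^sup>2 = (cmod X)\<^sup>2 / nw" for X
        using nwp by (simp add: norm_divide power_divide)
      show ?thesis unfolding ov q by (simp only: sum_divide_distrib)
    qed
    ultimately have "sqrt ((\<Sum>s<d. (cmod (\<Sum>t<d. Ob s t * w t))\<^sup>2) / nw) \<le> opnorm1 d Ob" by simp
    then have "(\<Sum>s<d. (cmod (\<Sum>t<d. Ob s t * w t))\<^sup>2) / nw \<le> (opnorm1 d Ob)\<^sup>2"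
    proof -
      assume sq: "sqrt ((\<Sum>s<d. (cmod (\<Sum>t<d. Ob s t * w t))\<^sup>2) / nw) \<le> opnorm1 d Ob"
      define X where "X = (\<Sum>s<d. (cmod (\<Sum>t<d. Ob s t * w t))\<^sup>2) / nw"
      have X0: "0 \<le> X" unfolding X_def using nwp by (simp add: sum_nonneg)
      have "X = (sqrt X)\<^sup>2" using X0 by simp
      also have "\<dots> \<le> (opnorm1 d Ob)\<^sup>2" by (rule power_mono) (use sq X0 in \<open>auto simp: X_def\<close>)
      finally show ?thesis unfolding X_def .
    qed
    then show ?thesis using nwp unfolding nw_def[symmetric] by (simp add: divide_le_eq mult.commute)
  qed
qed

definition nrm :: "nat \<Rightarrow> nat \<Rightarrow> ((nat \<Rightarrow> nat) \<Rightarrow> complex) \<Rightarrow> real" where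
  "nrm d n v = (\<Sum>f\<in>basis_idx d n. (cmod (v f))\<^sup>2)"

definition app :: "nat \<Rightarrow> nat \<Rightarrow> opn \<Rightarrow> ((nat \<Rightarrow> nat) \<Rightarrow> complex) \<Rightarrow> (nat \<Rightarrow> nat) \<Rightarrow> complex" where
  "app d n X v = (\<lambda>f. \<Sum>g\<in>basis_idx d n. X f g * v g)"

lemma split1:
  assumes m: "m < n"
  shows "(\<Sum>g\<in>basis_idx d n. F g) = (\<Sum>c\<in>({..<n} - {m}) \<rightarrow>\<^sub>E {0..<d}. \<Sum>t<d. F (c(m := t)))"
proof -
  have "(\<Sum>c\<in>({..<n} - {m}) \<rightarrow>\<^sub>E {0..<d}. \<Sum>t<d. F (c(m := t))) =
        (\<Sum>(c,t)\<in>(({..<n} - {m}) \<rightarrow>\<^sub>E {0..<d}) \<times> {..<d}. F (c(m := t)))"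
    by (rule sum.cartesian_product)
  also have "\<dots> = (\<Sum>g\<in>basis_idx d n. F g)"
  proof (rule sum.reindex_bij_witness[of _ "\<lambda>g. (g(m := undefined), g m)" "\<lambda>(c,t). c(m := t)"])
    fix a assume a: "a \<in> (({..<n} - {m}) \<rightarrow>\<^sub>E {0..<d}) \<times> {..<d}"
    obtain c t where ct: "a = (c, t)" by fastforce
    have c: "c \<in> ({..<n} - {m}) \<rightarrow>\<^sub>E {0..<d}" and t: "t < d" using a ct by auto
    have cm: "c m = undefined" using c by (auto simp: PiE_iff extensional_def)
    show "((case a of (c, t) \<Rightarrow> c(m := t))(m := undefined), (case a of (c, t) \<Rightarrow> c(m := t)) m) = a"
      using cm ct by (auto simp: fun_eq_iff)
    show "(case a of (c, t) \<Rightarrow> c(m := t)) \<in> basis_idx d n"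
      using c t m ct unfolding basis_idx_eq by (auto simp: PiE_iff extensional_def)
    show "F (case a of (c, t) \<Rightarrow> c(m := t)) = (case a of (c, t) \<Rightarrow> F (c(m := t)))"
      using ct by simp
  next
    fix b assume b: "b \<in> basis_idx d n"
    show "(case (b(m := undefined), b m) of (c, t) \<Rightarrow> c(m := t)) = b" by simp
    show "(b(m := undefined), b m) \<in> (({..<n} - {m}) \<rightarrow>\<^sub>E {0..<d}) \<times> {..<d}"
      using b m unfolding basis_idx_eq by (auto simp: PiE_iff extensional_def)
  qed
  finally show ?thesis by simp
qed

lemma local_cond:
  assumes c: "c \<in> ({..<n} - {m}) \<rightarrow>\<^sub>E {0..<d}" and c': "c' \<in> ({..<n} - {m}) \<rightarrow>\<^sub>E {0..<d}"
  shows "(\<forall>j<n. j \<noteq> m \<longrightarrow> (c(m := s)) j = (c'(m := t)) j) \<longleftrightarrow> c' = c"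
proof -
  have "(\<forall>j<n. j \<noteq> m \<longrightarrow> (c(m := s)) j = (c'(m := t)) j) \<longleftrightarrow> (\<forall>j\<in>{..<n} - {m}. c' j = c j)" by auto
  also have "\<dots> \<longleftrightarrow> c' = c" using c c' by (auto intro: PiE_ext)
  finally show ?thesis .
qed

lemma app_local:
  assumes m: "m < n" and c: "c \<in> ({..<n} - {m}) \<rightarrow>\<^sub>E {0..<d}"
  shows "app d n (local_op n m Ob) v (c(m := s)) = (\<Sum>t<d. Ob s t * v (c(m := t)))"
proof -
  have "app d n (local_op n m Ob) v (c(m := s)) =
     (\<Sum>c'\<in>({..<n} - {m}) \<rightarrow>\<^sub>E {0..<d}. \<Sum>t<d. local_op n m Ob (c(m := s)) (c'(m := t)) * v (c'(m := t)))"
    unfolding app_def by (rule split1[OF m])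
  also have "\<dots> = (\<Sum>c'\<in>({..<n} - {m}) \<rightarrow>\<^sub>E {0..<d}. if c' = c then (\<Sum>t<d. Ob s t * v (c(m := t))) else 0)"
  proof (rule sum.cong[OF refl])
    fix c' assume c': "c' \<in> ({..<n} - {m}) \<rightarrow>\<^sub>E {0..<d}"
    have l: "local_op n m Ob (c(m := s)) (c'(m := t)) = (if c' = c then Ob s t else 0)" for t
      unfolding local_op_def local_cond[OF c c', of s t] by (simp only: fun_upd_same)
    show "(\<Sum>t<d. local_op n m Ob (c(m := s)) (c'(m := t)) * v (c'(m := t))) =
          (if c' = c then (\<Sum>t<d. Ob s t * v (c(m := t))) else 0)"
      unfolding l by (cases "c' = c") simp_all
  qed
  also have "\<dots> = (\<Sum>t<d. Ob s t * v (c(m := t)))" using c by (simp add: finite_PiE)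
  finally show ?thesis .
qed

lemma local_norm:
  assumes m: "m < n"
  shows "nrm d n (app d n (local_op n m Ob) v) \<le> (opnorm1 d Ob)\<^sup>2 * nrm d n v"
proof -
  let ?C = "({..<n} - {m}) \<rightarrow>\<^sub>E {0..<d}"
  have "nrm d n (app d n (local_op n m Ob) v) = (\<Sum>c\<in>?C. \<Sum>s<d. (cmod (\<Sum>t<d. Ob s t * v (c(m := t))))\<^sup>2)"
    unfolding nrm_def split1[OF m] 
    apply (rule sum.cong[OF refl])
    apply (rule sum.cong[OF refl])
    apply (subst app_local[OF m])
    apply assumption
    apply (rule refl)
    done
  also have "\<dots> \<le> (\<Sum>c\<in>?C. (opnorm1 d Ob)\<^sup>2 * (\<Sum>t<d. (cmod (v (c(m := t))))\<^sup>2))"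
    apply (rule sum_mono)
    apply (rule opnorm_bound[where w="\<lambda>t. v (_(m := t))"])
    done
  also have "\<dots> = (opnorm1 d Ob)\<^sup>2 * nrm d n v"
    unfolding nrm_def split1[OF m] sum_distrib_left ..
  finally show ?thesis .
qed

lemma local_herm:
  assumes H: "hermitian1 d Ob" and m: "m < n" and f: "f \<in> basis_idx d n" and g: "g \<in> basis_idx d n"
  shows "cnj (local_op n m Ob f g) = local_op n m Ob g f"
proof -
  have "f m < d" "g m < d" using PiE_mem[OF f[unfolded basis_idx_eq], of m] PiE_mem[OF g[unfolded basis_idx_eq], of m] m by auto
  then have h: "cnj (Ob (f m) (g m)) = Ob (g m) (f m)" using hermD[OF H \<open>g m < d\<close> \<open>f m < d\<close>] by simp
  have c: "(\<forall>i<n. i \<noteq> m \<longrightarrow> g i = f i) \<longleftrightarrow> (\<forall>i<n. i \<noteq> m \<longrightarrow> f i = g i)" by auto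
  show ?thesis unfolding local_op_def c by (cases "\<forall>i<n. i \<noteq> m \<longrightarrow> f i = g i") (simp_all add: h, blast)
qed

lemma sum_sig:
  assumes k: "1 \<le> k" and ak: "a + k \<le> n"
  shows "(\<Sum>f\<in>basis_idx d n. G (sig a k n f)) = (\<Sum>h\<in>basis_idx d n. G h)"
  by (rule sum.reindex_bij_witness[of _ "sig' a k n" "sig a k n"])
     (simp_all add: sig'_sig[OF k ak] sig_sig'[OF k ak] sig_in[OF k ak] sig'_in[OF k ak])

lemma sum_sig2:
  assumes k: "1 \<le> k" and ak: "a + k \<le> n"
  shows "(\<Sum>f\<in>basis_idx d n. G (sig a k n f) * H f) = (\<Sum>h\<in>basis_idx d n. G h * H (sig' a k n h))"
  by (rule sum.reindex_bij_witness[of _ "sig' a k n" "sig a k n"])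
     (simp_all add: sig'_sig[OF k ak] sig_sig'[OF k ak] sig_in[OF k ak] sig'_in[OF k ak])

lemma sum_sig':
  assumes k: "1 \<le> k" and ak: "a + k \<le> n"
  shows "(\<Sum>f\<in>basis_idx d n. G (sig' a k n f)) = (\<Sum>h\<in>basis_idx d n. G h)"
  by (rule sum.reindex_bij_witness[of _ "sig a k n" "sig' a k n"])
     (simp_all add: sig'_sig[OF k ak] sig_sig'[OF k ak] sig_in[OF k ak] sig'_in[OF k ak])

lemma A_norm:
  assumes k: "1 \<le> k" and ik: "i * k + k \<le> n"
  shows "nrm d n (app d n (A_op d n k Ob i) v) \<le> (opnorm1 d Ob)\<^sup>2 * nrm d n v"
proof -
  have m: "i * k < n" using k ik by simp
  have "nrm d n (app d n (A_op d n k Ob i) v) = (\<Sum>f\<in>basis_idx d n. (cmod (app d n (local_op n (i*k) Ob) v (sig (i*k) k n f)))\<^sup>2)"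
    unfolding nrm_def app_def by (intro sum.cong refl) (simp add: A_rep[OF k ik])
  also have "\<dots> = nrm d n (app d n (local_op n (i*k) Ob) v)"
    unfolding nrm_def by (rule sum_sig[OF k ik, where G="\<lambda>h. (cmod (app d n (local_op n (i*k) Ob) v h))\<^sup>2"])
  also have "\<dots> \<le> (opnorm1 d Ob)\<^sup>2 * nrm d n v" by (rule local_norm[OF m])
  finally show ?thesis .
qed

lemma Aadj_norm:
  assumes H: "hermitian1 d Ob" and k: "1 \<le> k" and ik: "i * k + k \<le> n"
  shows "nrm d n (app d n (adj (A_op d n k Ob i)) v) \<le> (opnorm1 d Ob)\<^sup>2 * nrm d n v"
proof -
  have m: "i * k < n" using k ik by simp
  let ?L = "local_op n (i*k) Ob" and ?w = "\<lambda>h. v (sig' (i*k) k n h)"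
  have e: "app d n (adj (A_op d n k Ob i)) v g = app d n ?L ?w g" if g: "g \<in> basis_idx d n" for g
  proof -
    have "app d n (adj (A_op d n k Ob i)) v g = (\<Sum>f\<in>basis_idx d n. cnj (?L (sig (i*k) k n f) g) * v f)"
      unfolding app_def adj_def by (intro sum.cong refl) (simp add: A_rep[OF k ik])
    also have "\<dots> = (\<Sum>h\<in>basis_idx d n. cnj (?L h g) * ?w h)"
      by (rule sum_sig2[OF k ik, where G="\<lambda>h. cnj (?L h g)" and H=v])
    also have "\<dots> = app d n ?L ?w g"
      unfolding app_def by (intro sum.cong refl) (simp add: local_herm[OF H m _ g])
    finally show ?thesis .
  qed
  have "nrm d n (app d n (adj (A_op d n k Ob i)) v) = nrm d n (app d n ?L ?w)"
    unfolding nrm_def by (intro sum.cong refl) (simp add: e)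
  also have "\<dots> \<le> (opnorm1 d Ob)\<^sup>2 * nrm d n ?w" by (rule local_norm[OF m])
  also have "nrm d n ?w = nrm d n v"
    unfolding nrm_def by (rule sum_sig'[OF k ik, where G="\<lambda>h. (cmod (v h))\<^sup>2"])
  finally show ?thesis .
qed

lemma cmod_add_sq: "(cmod (x + y))\<^sup>2 \<le> 2 * (cmod x)\<^sup>2 + 2 * (cmod y)\<^sup>2"
proof -
  have "cmod (x + y) \<le> cmod x + cmod y" by (rule norm_triangle_ineq)
  then have "(cmod (x + y))\<^sup>2 \<le> (cmod x + cmod y)\<^sup>2" by (rule power_mono) simp
  also have "\<dots> \<le> 2 * (cmod x)\<^sup>2 + 2 * (cmod y)\<^sup>2"
  proof -
    have "0 \<le> (cmod x - cmod y)\<^sup>2" by simp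
    then show ?thesis unfolding power2_sum power2_diff by linarith
  qed
  finally show ?thesis .
qed

definition Bop :: "nat \<Rightarrow> nat \<Rightarrow> nat \<Rightarrow> op1 \<Rightarrow> nat \<Rightarrow> opn" where
  "Bop d n k Ob i = (\<lambda>f g. A_op d n k Ob i f g + adj (A_op d n k Ob i) f g)"

lemma B_norm:
  assumes H: "hermitian1 d Ob" and k: "1 \<le> k" and ik: "i * k + k \<le> n"
  shows "nrm d n (app d n (Bop d n k Ob i) v) \<le> 4 * (opnorm1 d Ob)\<^sup>2 * nrm d n v"
proof -
  let ?A = "A_op d n k Ob i"
  have "app d n (Bop d n k Ob i) v f = app d n ?A v f + app d n (adj ?A) v f" for f
    unfolding app_def Bop_def by (simp add: sum.distrib distrib_right)
  then have "nrm d n (app d n (Bop d n k Ob i) v) \<le> (\<Sum>f\<in>basis_idx d n. 2 * (cmod (app d n ?A v f))\<^sup>2 + 2 * (cmod (app d n (adj ?A) v f))\<^sup>2)"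
    unfolding nrm_def by (intro sum_mono) (simp add: cmod_add_sq)
  also have "\<dots> = 2 * nrm d n (app d n ?A v) + 2 * nrm d n (app d n (adj ?A) v)"
    unfolding nrm_def by (simp add: sum.distrib sum_distrib_left)
  also have "\<dots> \<le> 2 * ((opnorm1 d Ob)\<^sup>2 * nrm d n v) + 2 * ((opnorm1 d Ob)\<^sup>2 * nrm d n v)"
    using A_norm[OF k ik, where Ob=Ob and v=v and d=d] Aadj_norm[OF H k ik, where v=v] by linarith
  finally show ?thesis by (simp add: mult_ac)
qed

definition Rv :: "nat \<Rightarrow> (nat \<Rightarrow> nat \<Rightarrow> complex) \<Rightarrow> (nat \<Rightarrow> nat) \<Rightarrow> (nat \<Rightarrow> nat) \<Rightarrow> complex" where
  "Rv n r L f = (\<Prod>j<n. r (L j) (f j))"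

lemma tp_gram:
  assumes r: "\<forall>a<d. \<forall>b<d. \<rho> a b = (\<Sum>l<d. r l a * cnj (r l b))"
    and h: "h \<in> basis_idx d n" and f: "f \<in> basis_idx d n"
  shows "tensor_pow n \<rho> h f = (\<Sum>L\<in>basis_idx d n. Rv n r L h * cnj (Rv n r L f))"
proof -
  have "tensor_pow n \<rho> h f = (\<Prod>j<n. \<Sum>l\<in>{0..<d}. r l (h j) * cnj (r l (f j)))"
    unfolding tensor_pow_def
  proof (rule prod.cong[OF refl])
    fix j assume "j \<in> {..<n}"
    then have "h j < d" "f j < d" using PiE_mem[OF h[unfolded basis_idx_eq], of j] PiE_mem[OF f[unfolded basis_idx_eq], of j] by auto
    then show "\<rho> (h j) (f j) = (\<Sum>l\<in>{0..<d}. r l (h j) * cnj (r l (f j)))" using r by (simp add: atLeast0LessThan)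
  qed
  also have "\<dots> = (\<Sum>L\<in>{..<n} \<rightarrow>\<^sub>E {0..<d}. \<Prod>j<n. r (L j) (h j) * cnj (r (L j) (f j)))"
    by (rule prod_sum_PiE) auto
  also have "\<dots> = (\<Sum>L\<in>basis_idx d n. Rv n r L h * cnj (Rv n r L f))"
    unfolding basis_idx_eq Rv_def by (simp add: prod.distrib cnj_prod)
  finally show ?thesis .
qed

lemma Ex_gram:
  assumes r: "\<forall>a<d. \<forall>b<d. \<rho> a b = (\<Sum>l<d. r l a * cnj (r l b))"
  shows "Expv d n \<rho> Z = (\<Sum>L\<in>basis_idx d n. \<Sum>f\<in>basis_idx d n. cnj (Rv n r L f) * app d n Z (Rv n r L) f)"
proof -
  have "Expv d n \<rho> Z = (\<Sum>f\<in>basis_idx d n. \<Sum>h\<in>basis_idx d n. \<Sum>L\<in>basis_idx d n. Z f h * (Rv n r L h * cnj (Rv n r L f)))"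
    unfolding Expv_def by (intro sum.cong refl) (simp add: tp_gram[OF r] sum_distrib_left)
  also have "\<dots> = (\<Sum>f\<in>basis_idx d n. \<Sum>L\<in>basis_idx d n. \<Sum>h\<in>basis_idx d n. Z f h * (Rv n r L h * cnj (Rv n r L f)))"
    by (rule sum.cong[OF refl], rule sum.swap)
  also have "\<dots> = (\<Sum>L\<in>basis_idx d n. \<Sum>f\<in>basis_idx d n. \<Sum>h\<in>basis_idx d n. Z f h * (Rv n r L h * cnj (Rv n r L f)))"
    by (rule sum.swap)
  also have "\<dots> = (\<Sum>L\<in>basis_idx d n. \<Sum>f\<in>basis_idx d n. cnj (Rv n r L f) * app d n Z (Rv n r L) f)"
    unfolding app_def by (intro sum.cong refl) (simp add: sum_distrib_left mult_ac)
  finally show ?thesis .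
qed

definition hermB :: "nat \<Rightarrow> nat \<Rightarrow> opn \<Rightarrow> bool" where
  "hermB d n B \<longleftrightarrow> (\<forall>f\<in>basis_idx d n. \<forall>g\<in>basis_idx d n. cnj (B f g) = B g f)"

lemma quad_sq:
  assumes B: "hermB d n B"
  shows "(\<Sum>f\<in>basis_idx d n. cnj (v f) * app d n (opmult d n B B) v f) = of_real (nrm d n (app d n B v))"
proof -
  let ?w = "app d n B v"
  have "(\<Sum>f\<in>basis_idx d n. cnj (v f) * app d n (opmult d n B B) v f) =
        (\<Sum>f\<in>basis_idx d n. \<Sum>g\<in>basis_idx d n. cnj (v f) * B f g * ?w g)"
  proof (rule sum.cong[OF refl])
    fix f
    have "app d n (opmult d n B B) v f = (\<Sum>h\<in>basis_idx d n. \<Sum>g\<in>basis_idx d n. B f g * B g h * v h)"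
      unfolding app_def opmult_def by (simp add: sum_distrib_right)
    also have "\<dots> = (\<Sum>g\<in>basis_idx d n. B f g * ?w g)"
      unfolding app_def by (subst sum.swap) (simp add: sum_distrib_left mult_ac)
    finally show "cnj (v f) * app d n (opmult d n B B) v f = (\<Sum>g\<in>basis_idx d n. cnj (v f) * B f g * ?w g)"
      by (simp add: sum_distrib_left mult_ac)
  qed
  also have "\<dots> = (\<Sum>g\<in>basis_idx d n. \<Sum>f\<in>basis_idx d n. cnj (v f) * B f g * ?w g)"
    by (rule sum.swap)
  also have "\<dots> = (\<Sum>g\<in>basis_idx d n. cnj (?w g) * ?w g)"
  proof (rule sum.cong[OF refl])
    fix g assume g: "g \<in> basis_idx d n"
    have "cnj (?w g) = (\<Sum>f\<in>basis_idx d n. cnj (v f) * B f g)"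
      unfolding app_def using B g unfolding hermB_def by (auto intro!: sum.cong simp: mult.commute)
    then show "(\<Sum>f\<in>basis_idx d n. cnj (v f) * B f g * ?w g) = cnj (?w g) * ?w g"
      by (simp add: sum_distrib_right)
  qed
  also have "\<dots> = of_real (nrm d n ?w)"
    unfolding nrm_def of_real_sum
  proof (rule sum.cong[OF refl])
    fix g show "cnj (?w g) * ?w g = of_real ((cmod (?w g))\<^sup>2)"
      unfolding complex_norm_square by (simp add: mult.commute)
  qed
  finally show ?thesis .
qed

lemma Ex_BB:
  assumes r: "\<forall>a<d. \<forall>b<d. \<rho> a b = (\<Sum>l<d. r l a * cnj (r l b))" and B: "hermB d n B"
  shows "Expv d n \<rho> (opmult d n B B) = of_real (\<Sum>L\<in>basis_idx d n. nrm d n (app d n B (Rv n r L)))"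
  unfolding Ex_gram[OF r] of_real_sum by (intro sum.cong refl) (rule quad_sq[OF B])

lemma Rsum:
  assumes r: "\<forall>a<d. \<forall>b<d. \<rho> a b = (\<Sum>l<d. r l a * cnj (r l b))" and tr: "(\<Sum>t<d. \<rho> t t) = 1"
  shows "(\<Sum>L\<in>basis_idx d n. nrm d n (Rv n r L)) = 1"
proof -
  have one: "(\<Sum>l\<in>{0..<d}. \<Sum>t\<in>{0..<d}. (cmod (r l t))\<^sup>2) = 1"
  proof -
    have "(\<Sum>t<d. \<rho> t t) = (\<Sum>t<d. of_real (\<Sum>l<d. (cmod (r l t))\<^sup>2))"
    proof (rule sum.cong[OF refl])
      fix t assume "t \<in> {..<d}"
      then have "\<rho> t t = (\<Sum>l<d. r l t * cnj (r l t))" using r by auto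
      also have "\<dots> = (\<Sum>l<d. of_real ((cmod (r l t))\<^sup>2))" unfolding complex_norm_square ..
      finally show "\<rho> t t = of_real (\<Sum>l<d. (cmod (r l t))\<^sup>2)" by simp
    qed
    then have "complex_of_real (\<Sum>t<d. \<Sum>l<d. (cmod (r l t))\<^sup>2) = 1" using tr
      unfolding of_real_sum by simp
    then have "(\<Sum>t<d. \<Sum>l<d. (cmod (r l t))\<^sup>2) = 1" by (simp only: of_real_eq_1_iff)
    then show ?thesis unfolding atLeast0LessThan by (subst sum.swap) assumption
  qed
  have "(\<Sum>L\<in>basis_idx d n. nrm d n (Rv n r L)) = (\<Sum>L\<in>{..<n} \<rightarrow>\<^sub>E {0..<d}. \<Sum>f\<in>{..<n} \<rightarrow>\<^sub>E {0..<d}. \<Prod>j<n. (cmod (r (L j) (f j)))\<^sup>2)"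
    unfolding nrm_def Rv_def basis_idx_eq by (simp add: prod_norm[symmetric] prod_power_distrib)
  also have "\<dots> = (\<Sum>L\<in>{..<n} \<rightarrow>\<^sub>E {0..<d}. \<Prod>j<n. \<Sum>t\<in>{0..<d}. (cmod (r (L j) t))\<^sup>2)"
    by (intro sum.cong refl) (rule prod_sum_PiE[symmetric], auto)
  also have "\<dots> = (\<Prod>j<n. \<Sum>l\<in>{0..<d}. \<Sum>t\<in>{0..<d}. (cmod (r l t))\<^sup>2)"
    by (rule prod_sum_PiE[where f="\<lambda>j l. \<Sum>t\<in>{0..<d}. (cmod (r l t))\<^sup>2", symmetric]) auto
  also have "\<dots> = 1" using one by simp
  finally show ?thesis .
qed

lemma tp_herm:
  assumes H: "hermitian1 d \<rho>" and h: "h \<in> basis_idx d n" and f: "f \<in> basis_idx d n"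
  shows "cnj (tensor_pow n \<rho> h f) = tensor_pow n \<rho> f h"
  unfolding tensor_pow_def cnj_prod
proof (rule prod.cong[OF refl])
  fix j assume "j \<in> {..<n}"
  then have "h j < d" "f j < d" using PiE_mem[OF h[unfolded basis_idx_eq], of j] PiE_mem[OF f[unfolded basis_idx_eq], of j] by auto
  then show "cnj (\<rho> (h j) (f j)) = \<rho> (f j) (h j)" using hermD[OF H \<open>f j < d\<close> \<open>h j < d\<close>] by simp
qed

lemma Ex_real:
  assumes H: "hermitian1 d \<rho>" and B: "hermB d n B"
  shows "cnj (Expv d n \<rho> B) = Expv d n \<rho> B"
proof -
  have "cnj (Expv d n \<rho> B) = (\<Sum>f\<in>basis_idx d n. \<Sum>h\<in>basis_idx d n. B h f * tensor_pow n \<rho> f h)"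
    unfolding Expv_def cnj_sum
    by (intro sum.cong refl) (use B H in \<open>simp add: hermB_def tp_herm\<close>)
  also have "\<dots> = Expv d n \<rho> B" unfolding Expv_def by (rule sum.swap)
  finally show ?thesis .
qed

lemma Ex_sum:
  assumes I: "finite I"
  shows "Expv d n \<rho> (\<lambda>f g. \<Sum>i\<in>I. X i f g) = (\<Sum>i\<in>I. Expv d n \<rho> (X i))"
proof -
  have "Expv d n \<rho> (\<lambda>f g. \<Sum>i\<in>I. X i f g) = (\<Sum>f\<in>basis_idx d n. \<Sum>h\<in>basis_idx d n. \<Sum>i\<in>I. X i f h * tensor_pow n \<rho> h f)"
    unfolding Expv_def by (simp add: sum_distrib_right)
  also have "\<dots> = (\<Sum>f\<in>basis_idx d n. \<Sum>i\<in>I. \<Sum>h\<in>basis_idx d n. X i f h * tensor_pow n \<rho> h f)"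
    by (rule sum.cong[OF refl], rule sum.swap)
  also have "\<dots> = (\<Sum>i\<in>I. \<Sum>f\<in>basis_idx d n. \<Sum>h\<in>basis_idx d n. X i f h * tensor_pow n \<rho> h f)"
    by (rule sum.swap)
  finally show ?thesis unfolding Expv_def .
qed

lemma Ex_scale: "Expv d n \<rho> (\<lambda>f g. c * X f g) = c * Expv d n \<rho> X"
  unfolding Expv_def by (simp add: sum_distrib_left mult.assoc)

lemma opmult_scale_sum:
  "opmult d n (\<lambda>f g. c * (\<Sum>i\<in>I. X i f g)) (\<lambda>f g. c * (\<Sum>j\<in>I. Y j f g)) =
   (\<lambda>f g. c * c * (\<Sum>i\<in>I. \<Sum>j\<in>I. opmult d n (X i) (Y j) f g))"
proof (intro ext)
  fix f g
  have "opmult d n (\<lambda>f g. c * (\<Sum>i\<in>I. X i f g)) (\<lambda>f g. c * (\<Sum>j\<in>I. Y j f g)) f g =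
     (\<Sum>h\<in>basis_idx d n. c * c * (\<Sum>i\<in>I. \<Sum>j\<in>I. X i f h * Y j h g))"
    unfolding opmult_def by (intro sum.cong refl) (simp add: sum_product mult_ac)
  also have "\<dots> = c * c * (\<Sum>h\<in>basis_idx d n. \<Sum>i\<in>I. \<Sum>j\<in>I. X i f h * Y j h g)"
    by (simp add: sum_distrib_left)
  also have "(\<Sum>h\<in>basis_idx d n. \<Sum>i\<in>I. \<Sum>j\<in>I. X i f h * Y j h g) = (\<Sum>i\<in>I. \<Sum>h\<in>basis_idx d n. \<Sum>j\<in>I. X i f h * Y j h g)"
    by (rule sum.swap)
  also have "\<dots> = (\<Sum>i\<in>I. \<Sum>j\<in>I. \<Sum>h\<in>basis_idx d n. X i f h * Y j h g)"
    by (rule sum.cong[OF refl], rule sum.swap)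
  finally show "opmult d n (\<lambda>f g. c * (\<Sum>i\<in>I. X i f g)) (\<lambda>f g. c * (\<Sum>j\<in>I. Y j f g)) f g =
     c * c * (\<Sum>i\<in>I. \<Sum>j\<in>I. opmult d n (X i) (Y j) f g)"
    unfolding opmult_def .
qed

lemma variance_Ex: "variance d n \<rho> Q = Expv d n \<rho> (opmult d n Q Q) - (Expv d n \<rho> Q)\<^sup>2"
  unfolding variance_def optrace_def Expv_def opmult_def ..

lemma T_eq: "T_op d n k Ob = (\<lambda>f g. (1 / (2 * of_nat (n div k))) * (\<Sum>i<n div k. Bop d n k Ob i f g))"
  unfolding T_op_def Bop_def ..

lemma B_herm: "hermB d n (Bop d n k Ob i)"
  unfolding hermB_def Bop_def adj_def by simp

lemma B_loc: "1 \<le> k \<Longrightarrow> i * k + k \<le> n \<Longrightarrow> locS d n {i*k..<i*k+k} (Bop d n k Ob i)"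
  unfolding Bop_def by (intro locS_add locS_adj A_loc)

lemma blocks_disj:
  fixes i j k :: nat
  assumes "i \<noteq> j" shows "{i*k..<i*k+k} \<inter> {j*k..<j*k+k} = {}"
proof -
  { fix x assume x: "i*k \<le> x" "x < i*k+k" "j*k \<le> x" "x < j*k+k"
    have "i < j \<or> j < i" using assms by arith
    then have False
    proof
      assume "i < j" then have "(i+1)*k \<le> j*k" by (intro mult_le_mono1) simp
      then have "i*k + k \<le> j*k" by (simp add: algebra_simps)
      then show False using x by simp
    next
      assume "j < i" then have "(j+1)*k \<le> i*k" by (intro mult_le_mono1) simp
      then have "j*k + k \<le> i*k" by (simp add: algebra_simps)
      then show False using x by simp
    qed }
  note * = this
  show ?thesis
  proof (rule equals0I)
    fix x assume "x \<in> {i*k..<i*k+k} \<inter> {j*k..<j*k+k}"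
    then show False using *[of x] by auto
  qed
qed

theorem lemma2p19:
  fixes d n k :: nat and Ob \<rho> :: "nat \<Rightarrow> nat \<Rightarrow> complex"
  assumes "hermitian1 d Ob"
    and "density1 d \<rho>"
    and "1 \<le> n" and "1 \<le> k" and "k \<le> n"
  shows "variance d n \<rho> (T_op d n k Ob) \<in> \<real>
       \<and> Re (variance d n \<rho> (T_op d n k Ob)) \<le> 2 * real k * (opnorm1 d Ob)\<^sup>2 / real n"
proof -
  note H = assms(1) and D = assms(2) and k1 = assms(4) and kn = assms(5)
  define m where "m = n div k"
  have m1: "1 \<le> m" unfolding m_def using div_greater_zero_iff[of n k] k1 kn by linarith
  have mk: "m * k \<le> n" unfolding m_def by simp
  have ik: "i * k + k \<le> n" if "i < m" for i
  proof -
    have "(i + 1) * k \<le> m * k" using that by (intro mult_le_mono1) simp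
    then show ?thesis using mk by (simp add: algebra_simps)
  qed
  obtain r where r: "\<forall>a<d. \<forall>b<d. \<rho> a b = (\<Sum>l<d. r l a * cnj (r l b))" using gram[OF D] by blast
  have tr: "(\<Sum>t<d. \<rho> t t) = 1" and Hr: "hermitian1 d \<rho>" using D unfolding density1_def by auto
  define B where "B = (\<lambda>i. Bop d n k Ob i)"
  define e where "e = (\<lambda>i. Expv d n \<rho> (B i))"
  define w where "w = (\<lambda>i. \<Sum>L\<in>basis_idx d n. nrm d n (app d n (B i) (Rv n r L)))"
  define c :: complex where "c = 1 / (2 * of_nat m)"
  define on where "on = (opnorm1 d Ob)\<^sup>2"
  have T: "T_op d n k Ob = (\<lambda>f g. c * (\<Sum>i<m. B i f g))"
    unfolding T_eq B_def c_def m_def ..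
  have ETT: "Expv d n \<rho> (opmult d n (T_op d n k Ob) (T_op d n k Ob)) = c * c * (\<Sum>i<m. \<Sum>j<m. Expv d n \<rho> (opmult d n (B i) (B j)))"
    unfolding T opmult_scale_sum Ex_scale Ex_sum[OF finite_lessThan] ..
  have ET: "Expv d n \<rho> (T_op d n k Ob) = c * (\<Sum>i<m. e i)"
    unfolding T Ex_scale Ex_sum[OF finite_lessThan] e_def ..
  have off: "Expv d n \<rho> (opmult d n (B i) (B j)) = e i * e j" if ij: "i < m" "j < m" "i \<noteq> j" for i j
  proof -
    let ?Ji = "{i*k..<i*k+k}" and ?Jj = "{j*k..<j*k+k}"
    have Ji: "?Ji \<subseteq> {..<n}" using ik[OF ij(1)] by auto
    have Jj: "?Jj \<subseteq> {..<n} - ?Ji" using ik[OF ij(2)] blocks_disj[OF ij(3), of k] by auto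
    have L1: "locS d n ?Ji (B i)" unfolding B_def by (rule B_loc[OF k1 ik[OF ij(1)]])
    have L2: "locS d n ({..<n} - ?Ji) (B j)" unfolding B_def
      by (rule locS_mono[OF Jj _ B_loc[OF k1 ik[OF ij(2)]]]) auto
    show ?thesis unfolding e_def by (rule indep[where \<rho>=\<rho>, OF Ji L1 L2 tr])
  qed
  have diag: "Expv d n \<rho> (opmult d n (B i) (B i)) = of_real (w i)" for i
    unfolding w_def B_def by (rule Ex_BB[OF r B_herm])
  have ereal: "e i = of_real (Re (e i))" for i
  proof -
    have "cnj (e i) = e i" unfolding e_def B_def by (rule Ex_real[OF Hr B_herm])
    then have "Im (e i) = 0" by (simp add: complex_eq_iff)
    then show ?thesis by (simp add: complex_eq_iff)
  qed
  have w0: "0 \<le> w i" for i unfolding w_def nrm_def by (intro sum_nonneg) auto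
  have w4: "w i \<le> 4 * on" if "i < m" for i
  proof -
    have "w i \<le> (\<Sum>L\<in>basis_idx d n. 4 * on * nrm d n (Rv n r L))"
      unfolding w_def B_def on_def by (intro sum_mono B_norm[OF H k1 ik[OF that]])
    also have "\<dots> = 4 * on" by (simp add: sum_distrib_left[symmetric] Rsum[OF r tr])
    finally show ?thesis .
  qed
  define V where "V = (1 / (2 * real m))\<^sup>2 * (\<Sum>i<m. w i - (Re (e i))\<^sup>2)"
  have sq: "(\<Sum>i<m. e i)\<^sup>2 = (\<Sum>i<m. \<Sum>j<m. e i * e j)"
    unfolding power2_eq_square by (rule sum_product)
  have "variance d n \<rho> (T_op d n k Ob) = c * c * (\<Sum>i<m. \<Sum>j<m. Expv d n \<rho> (opmult d n (B i) (B j)) - e i * e j)"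
  proof -
    have d: "(\<Sum>i<m. \<Sum>j<m. Expv d n \<rho> (opmult d n (B i) (B j)) - e i * e j) =
       (\<Sum>i<m. \<Sum>j<m. Expv d n \<rho> (opmult d n (B i) (B j))) - (\<Sum>i<m. \<Sum>j<m. e i * e j)"
      by (simp only: sum_subtractf)
    have p: "(c * (\<Sum>i<m. e i))\<^sup>2 = c * c * (\<Sum>i<m. \<Sum>j<m. e i * e j)"
      unfolding sq[symmetric] by (simp add: power2_eq_square mult_ac)
    show ?thesis
      unfolding variance_Ex ETT ET p d right_diff_distrib ..
  qed
  also have "(\<Sum>i<m. \<Sum>j<m. Expv d n \<rho> (opmult d n (B i) (B j)) - e i * e j) =
             (\<Sum>i<m. \<Sum>j<m. if j = i then of_real (w i) - e i * e i else 0)"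
    by (intro sum.cong refl) (auto simp: off diag)
  also have "\<dots> = (\<Sum>i<m. of_real (w i - (Re (e i))\<^sup>2))"
  proof (rule sum.cong[OF refl])
    fix i assume "i \<in> {..<m}"
    then have "(\<Sum>j<m. if j = i then of_real (w i) - e i * e i else 0) = of_real (w i) - e i * e i" by simp
    also have "\<dots> = of_real (w i - (Re (e i))\<^sup>2)" by (subst (1 2) ereal) (simp add: power2_eq_square)
    finally show "(\<Sum>j<m. if j = i then of_real (w i) - e i * e i else 0) = of_real (w i - (Re (e i))\<^sup>2)" .
  qed
  also have "c * c * \<dots> = of_real V"
    unfolding V_def c_def of_real_sum[symmetric] by (simp add: power2_eq_square)
  finally have VV: "variance d n \<rho> (T_op d n k Ob) = of_real V" .
  have "V \<le> (1 / (2 * real m))\<^sup>2 * (\<Sum>i<m. 4 * on)"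
  proof -
    have "w i - (Re (e i))\<^sup>2 \<le> 4 * on" if "i \<in> {..<m}" for i
    proof -
      have "w i \<le> 4 * on" using w4[of i] that by simp
      moreover have "0 \<le> (Re (e i))\<^sup>2" by simp
      ultimately show ?thesis by linarith
    qed
    then show ?thesis unfolding V_def by (intro mult_left_mono sum_mono) auto
  qed
  also have "\<dots> = on / real m" using m1 by (simp add: power2_eq_square field_simps)
  also have "\<dots> \<le> 2 * real k * on / real n"
  proof -
    have "n = m * k + n mod k" unfolding m_def by simp
    moreover have "n mod k < k" using k1 by simp
    ultimately have "n < (m + 1) * k" by (simp add: algebra_simps)
    also have "\<dots> \<le> 2 * m * k" using m1 by (intro mult_le_mono1) simp
    finally have "n \<le> 2 * k * m" by (simp add: mult_ac)
    then have "real n \<le> real (2 * k * m)" by (simp only: of_nat_le_iff)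
    then have "real n \<le> 2 * real k * real m" by simp
    moreover have "0 \<le> on" unfolding on_def by simp
    ultimately have "on * real n \<le> on * (2 * real k * real m)" by (intro mult_left_mono)
    moreover have "0 < real m" "0 < real n" using m1 assms(3) by auto
    ultimately show ?thesis by (simp add: field_simps)
  qed
  finally have "V \<le> 2 * real k * on / real n" .
  then show ?thesis unfolding VV on_def by simp
qed

end
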